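(* In the setting of the context, suppose that $\rho:=\rho_{\mathcal A_\nu,\mathcal S_{\log},\pi_{\log}}$ is quasi-convex and lower semicontinuous with respect to $\tau_{\log}$. Then for all $X\in\mathcal C$, $$\eta_{\mathfrak R}(X)=\sup_{\varphi\in\mathcal D}\ \inf\big\{\pi(Z):\ Z\in\mathcal S,\ W\in\mathcal B_{\tilde\rho},\ \varphi(W)\ge\varphi(X)-\varphi(Z)\big\},$$ where $\mathcal D$ is the set of all log-linear $\tau$-continuous maps $\varphi\colon\mathcal C\to\mathbb R$ (and $\inf\emptyset=\infty$).
   Context: Probability space $(\Omega,\mathcal F,P)$; $L^0_{++}$ = a.s. strictly positive random variables; $L^\infty_{++}=L^\infty\cap L^0_{++}$; $\frac{\mathcal A}{\mathcal D}=\{AD^{-1}\}$. Setting: nonempty $\mathcal C,\mathcal S,\mathcal K\subset L^0_{++}$ with $\frac{\mathcal C}{\mathcal S}\subset\mathcal K$, $\mathcal K$ a cone, $(\mathcal C,\cdot)$ a group, and (so that all expressions are defined) $\mathcal K\subset\mathcal C$ and $\mathcal S\subset\mathcal C$; pricing map $\pi\colon\mathcal S\to(0,\infty)$. $\mathcal C_{\log},\mathcal S_{\log},\mathcal K_{\log}$ are the images under $\log$. $\mathcal C_{\log}$ is equipped with a topology $\tau_{\log}$ making it a locally convex topological vector space; $\mathcal C$ carries $\tau=\{\exp(U):U\in\tau_{\log}\}$. A map $\varphi\colon\mathcal C\to\mathbb R$ is log-linear if $\varphi(X^\alpha Y^\beta)=\alpha\varphi(X)+\beta\varphi(Y)$ for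 $X,Y\in\mathcal C$, $\alpha,\beta\in\mathbb R$; the log-linear $\tau$-continuous maps are exactly $\psi\circ\log$ with $\psi$ in the topological dual of $\mathcal C_{\log}$. A return risk measure (RRM), with $L^\infty_{++}\subset\mathcal K$, is a positively homogeneous nondecreasing $\tilde\rho\colon\mathcal K\to(0,\infty)$ with $\tilde\rho(1)=1$; $\mathcal B_{\tilde\rho}=\{K\in\mathcal K:\tilde\rho(K)\le1\}$; $\mathfrak R=(\mathcal B_{\tilde\rho},\mathcal S,\pi)$; MARRM $\eta_{\mathfrak R}(X)=\inf\{\pi(Z):Z\in\mathcal S,\ X/Z\in\mathcal B_{\tilde\rho}\}$. Further $\nu=\log\circ\tilde\rho\circ\exp$, $\mathcal A_\nu=\{Y\in\mathcal K_{\log}:\nu(Y)\le0\}$, $\pi_{\log}=\log\circ\pi\circ\exp$ on $\mathcal S_{\log}$, and $\rho_{\mathcal A_\nu,\mathcal S_{\log},\pi_{\log}}(X_{\log})=\inf\{\pi_{\log}(L):L\in\mathcal S_{\log},\ X_{\log}-L\in\mathcal A_\nu\}$ on $\mathcal C_{\log}$. Quasi-convex: $\rho(\alpha Y_1+(1-\alpha)Y_2)\le\max\{\rho(Y_1),\rho(Y_2)\}$. Conventions $\exp(-\infty)=0$, $\exp(\infty)=\infty$. *)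

theory Defs
  imports "HOL-Probability.Probability"
begin

text \<open>Random variables are represented by (measurable) functions; elements of
L0_{++} by everywhere strictly positive representatives.\<close>

definition L0pp :: "'a measure \<Rightarrow> ('a \<Rightarrow> real) set" where
  "L0pp M = {X \<in> borel_measurable M. \<forall>\<omega>. 0 < X \<omega>}"

definition Linfpp :: "'a measure \<Rightarrow> ('a \<Rightarrow> real) set" where
  "Linfpp M = {X \<in> L0pp M. \<exists>c. AE \<omega> in M. X \<omega> \<le> c}"

definition rv_div :: "('a \<Rightarrow> real) \<Rightarrow> ('a \<Rightarrow> real) \<Rightarrow> ('a \<Rightarrow> real)" where
  "rv_div X Z = (\<lambda>\<omega>. X \<omega> / Z \<omega>)"

definition rv_log :: "('a \<Rightarrow> real) \<Rightarrow> ('a \<Rightarrow> real)" where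
  "rv_log X = (\<lambda>\<omega>. ln (X \<omega>))"

definition rv_exp :: "('a \<Rightarrow> real) \<Rightarrow> ('a \<Rightarrow> real)" where
  "rv_exp Y = (\<lambda>\<omega>. exp (Y \<omega>))"

definition logset :: "('a \<Rightarrow> real) set \<Rightarrow> ('a \<Rightarrow> real) set" where
  "logset A = rv_log ` A"

definition is_mult_group :: "('a \<Rightarrow> real) set \<Rightarrow> bool" where
  "is_mult_group C \<longleftrightarrow> (\<lambda>\<omega>. 1) \<in> C \<and> (\<forall>X\<in>C. \<forall>Y\<in>C. (\<lambda>\<omega>. X \<omega> * Y \<omega>) \<in> C)
     \<and> (\<forall>X\<in>C. (\<lambda>\<omega>. 1 / X \<omega>) \<in> C)"

definition is_cone :: "('a \<Rightarrow> real) set \<Rightarrow> bool" where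
  "is_cone K \<longleftrightarrow> (\<forall>X\<in>K. \<forall>c::real. c > 0 \<longrightarrow> (\<lambda>\<omega>. c * X \<omega>) \<in> K)"

definition is_RRM :: "'a measure \<Rightarrow> ('a \<Rightarrow> real) set \<Rightarrow> (('a \<Rightarrow> real) \<Rightarrow> real) \<Rightarrow> bool" where
  "is_RRM M K \<rho> \<longleftrightarrow> Linfpp M \<subseteq> K \<and> (\<forall>X\<in>K. 0 < \<rho> X)
     \<and> (\<forall>X\<in>K. \<forall>c::real. c > 0 \<longrightarrow> \<rho> (\<lambda>\<omega>. c * X \<omega>) = c * \<rho> X)
     \<and> (\<forall>X\<in>K. \<forall>Y\<in>K. (AE \<omega> in M. X \<omega> \<le> Y \<omega>) \<longrightarrow> \<rho> X \<le> \<rho> Y)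
     \<and> \<rho> (\<lambda>\<omega>. 1) = 1"

definition acc_set :: "('a \<Rightarrow> real) set \<Rightarrow> (('a \<Rightarrow> real) \<Rightarrow> real) \<Rightarrow> ('a \<Rightarrow> real) set" where
  "acc_set K \<rho> = {W \<in> K. \<rho> W \<le> 1}"

text \<open>MARRM eta_R(X), with inf of the empty set = infinity.\<close>
definition MARRM :: "('a \<Rightarrow> real) set \<Rightarrow> (('a \<Rightarrow> real) \<Rightarrow> real) \<Rightarrow> ('a \<Rightarrow> real) set
    \<Rightarrow> ('a \<Rightarrow> real) \<Rightarrow> ereal" where
  "MARRM S \<pi> B X = Inf {ereal (\<pi> Z) | Z. Z \<in> S \<and> rv_div X Z \<in> B}"

definition nu :: "(('a \<Rightarrow> real) \<Rightarrow> real) \<Rightarrow> ('a \<Rightarrow> real) \<Rightarrow> real" where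
  "nu \<rho> Y = ln (\<rho> (rv_exp Y))"

definition A_nu :: "('a \<Rightarrow> real) set \<Rightarrow> (('a \<Rightarrow> real) \<Rightarrow> real) \<Rightarrow> ('a \<Rightarrow> real) set" where
  "A_nu K \<rho> = {Y \<in> logset K. nu \<rho> Y \<le> 0}"

definition pi_log :: "(('a \<Rightarrow> real) \<Rightarrow> real) \<Rightarrow> ('a \<Rightarrow> real) \<Rightarrow> real" where
  "pi_log \<pi> L = ln (\<pi> (rv_exp L))"

definition rho_log :: "('a \<Rightarrow> real) set \<Rightarrow> ('a \<Rightarrow> real) set \<Rightarrow> (('a \<Rightarrow> real) \<Rightarrow> real)
    \<Rightarrow> ('a \<Rightarrow> real) \<Rightarrow> ereal" where
  "rho_log A Slog \<pi>l x = Inf {ereal (\<pi>l L) | L. L \<in> Slog \<and> (\<lambda>\<omega>. x \<omega> - L \<omega>) \<in> A}"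

definition convex_fun_set :: "('a \<Rightarrow> real) set \<Rightarrow> bool" where
  "convex_fun_set W \<longleftrightarrow> (\<forall>y\<in>W. \<forall>z\<in>W. \<forall>t::real. 0 \<le> t \<and> t \<le> 1 \<longrightarrow> (\<lambda>\<omega>. t * y \<omega> + (1 - t) * z \<omega>) \<in> W)"

definition lctvs :: "('a \<Rightarrow> real) set \<Rightarrow> ('a \<Rightarrow> real) topology \<Rightarrow> bool" where
  "lctvs V T \<longleftrightarrow> topspace T = V \<and> V \<noteq> {}
     \<and> (\<forall>x\<in>V. \<forall>y\<in>V. \<forall>a b::real. (\<lambda>\<omega>. a * x \<omega> + b * y \<omega>) \<in> V)
     \<and> continuous_map (prod_topology T T) T (\<lambda>(x, y). \<lambda>\<omega>. x \<omega> + y \<omega>)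
     \<and> continuous_map (prod_topology euclideanreal T) T (\<lambda>(a, x). \<lambda>\<omega>. a * x \<omega>)
     \<and> (\<forall>U x. openin T U \<and> x \<in> U \<longrightarrow> (\<exists>W. openin T W \<and> convex_fun_set W \<and> x \<in> W \<and> W \<subseteq> U))"

definition quasi_convex_on :: "('a \<Rightarrow> real) set \<Rightarrow> (('a \<Rightarrow> real) \<Rightarrow> ereal) \<Rightarrow> bool" where
  "quasi_convex_on V f \<longleftrightarrow> (\<forall>x\<in>V. \<forall>y\<in>V. \<forall>t::real. 0 \<le> t \<and> t \<le> 1 \<longrightarrow>
       f (\<lambda>\<omega>. t * x \<omega> + (1 - t) * y \<omega>) \<le> max (f x) (f y))"

definition lsc_on :: "'b topology \<Rightarrow> ('b \<Rightarrow> ereal) \<Rightarrow> bool" where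
  "lsc_on T f \<longleftrightarrow> (\<forall>c::ereal. closedin T {x \<in> topspace T. f x \<le> c})"

definition log_linear :: "('a \<Rightarrow> real) set \<Rightarrow> (('a \<Rightarrow> real) \<Rightarrow> real) \<Rightarrow> bool" where
  "log_linear C \<phi> \<longleftrightarrow> (\<forall>X\<in>C. \<forall>Y\<in>C. \<forall>a b::real.
       \<phi> (\<lambda>\<omega>. X \<omega> powr a * Y \<omega> powr b) = a * \<phi> X + b * \<phi> Y)"

text \<open>tau = {exp(U) : U open in tau_log}, i.e. the pullback of tau_log along log.\<close>
definition tau_of :: "('a \<Rightarrow> real) set \<Rightarrow> ('a \<Rightarrow> real) topology \<Rightarrow> ('a \<Rightarrow> real) topology" where
  "tau_of C Tlog = pullback_topology C rv_log Tlog"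

definition dual_set :: "('a \<Rightarrow> real) set \<Rightarrow> ('a \<Rightarrow> real) topology \<Rightarrow> (('a \<Rightarrow> real) \<Rightarrow> real) set" where
  "dual_set C Tlog = {\<phi>. log_linear C \<phi> \<and> continuous_map (tau_of C Tlog) euclideanreal \<phi>}"

end

theory Submission
  imports Defs
begin



definition lin :: "('a \<Rightarrow> real) set \<Rightarrow> bool" where
  "lin V \<longleftrightarrow> (\<forall>x\<in>V. \<forall>y\<in>V. \<forall>a b::real. (\<lambda>\<omega>. a * x \<omega> + b * y \<omega>) \<in> V)"

definition sublin :: "('a \<Rightarrow> real) set \<Rightarrow> (('a \<Rightarrow> real) \<Rightarrow> real) \<Rightarrow> bool" where
  "sublin V q \<longleftrightarrow> (\<forall>x\<in>V. \<forall>y\<in>V. q (\<lambda>\<omega>. x \<omega> + y \<omega>) \<le> q x + q y)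
     \<and> (\<forall>x\<in>V. \<forall>t::real. t \<ge> 0 \<longrightarrow> q (\<lambda>\<omega>. t * x \<omega>) = t * q x)"

definition linf :: "('a \<Rightarrow> real) set \<Rightarrow> (('a \<Rightarrow> real) \<Rightarrow> real) \<Rightarrow> bool" where
  "linf V g \<longleftrightarrow> (\<forall>x\<in>V. \<forall>y\<in>V. \<forall>a b::real. g (\<lambda>\<omega>. a * x \<omega> + b * y \<omega>) = a * g x + b * g y)"

lemma lin_add: "lin V \<Longrightarrow> x \<in> V \<Longrightarrow> y \<in> V \<Longrightarrow> (\<lambda>\<omega>. x \<omega> + y \<omega>) \<in> V"
proof -
  assume "lin V" "x \<in> V" "y \<in> V"
  then have "(\<lambda>\<omega>. 1 * x \<omega> + 1 * y \<omega>) \<in> V" unfolding lin_def by blast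
  then show ?thesis by simp
qed

lemma lin_smul: "lin V \<Longrightarrow> x \<in> V \<Longrightarrow> (\<lambda>\<omega>. a * x \<omega>) \<in> V"
proof -
  assume "lin V" "x \<in> V"
  then have "(\<lambda>\<omega>. a * x \<omega> + 0 * x \<omega>) \<in> V" unfolding lin_def by blast
  then show ?thesis by simp
qed

lemma lin_zero: "lin V \<Longrightarrow> x \<in> V \<Longrightarrow> (\<lambda>\<omega>. 0) \<in> V"
  using lin_smul[of V x 0] by simp

lemma lin_neg: "lin V \<Longrightarrow> x \<in> V \<Longrightarrow> (\<lambda>\<omega>. - x \<omega>) \<in> V"
  using lin_smul[of V x "-1"] by simp

lemma lin_comb: "lin V \<Longrightarrow> x \<in> V \<Longrightarrow> y \<in> V \<Longrightarrow> (\<lambda>\<omega>. a * x \<omega> + b * y \<omega>) \<in> V"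
  unfolding lin_def by blast

lemma sublin_zero: "sublin V q \<Longrightarrow> x \<in> V \<Longrightarrow> q (\<lambda>\<omega>. 0) = 0"
proof -
  assume "sublin V q" "x \<in> V"
  then have "q (\<lambda>\<omega>. 0 * x \<omega>) = 0 * q x" unfolding sublin_def by blast
  then show ?thesis by simp
qed

lemma sublin_add: "sublin V q \<Longrightarrow> x \<in> V \<Longrightarrow> y \<in> V \<Longrightarrow> q (\<lambda>\<omega>. x \<omega> + y \<omega>) \<le> q x + q y"
  unfolding sublin_def by blast

lemma sublin_hom: "sublin V q \<Longrightarrow> x \<in> V \<Longrightarrow> t \<ge> 0 \<Longrightarrow> q (\<lambda>\<omega>. t * x \<omega>) = t * q x"
  unfolding sublin_def by blast

lemma sublin_lowb:
  assumes "lin V" "sublin V q" "x \<in> V"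
  shows "- q (\<lambda>\<omega>. - x \<omega>) \<le> q x"
proof -
  have "q (\<lambda>\<omega>. x \<omega> + - x \<omega>) \<le> q x + q (\<lambda>\<omega>. - x \<omega>)"
    using assms lin_neg sublin_add by blast
  moreover have "q (\<lambda>\<omega>. x \<omega> + - x \<omega>) = 0" using sublin_zero[OF assms(2,3)] by simp
  ultimately show ?thesis by simp
qed

lemma aux_sublin:
  assumes lin: "lin V" and sq: "sublin V q" and z: "z \<in> V" and c: "c \<le> q z"
  defines "r \<equiv> (\<lambda>x. Inf {q (\<lambda>\<omega>. x \<omega> + t * z \<omega>) - t * c | t. t \<ge> 0})"
  shows "sublin V r" and "\<And>x. x \<in> V \<Longrightarrow> r x \<le> q x"
    and "r (\<lambda>\<omega>. - z \<omega>) \<le> - c"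
proof -
  have mem: "\<And>x t. x \<in> V \<Longrightarrow> (\<lambda>\<omega>. x \<omega> + t * z \<omega>) \<in> V"
    using lin z lin_comb[of V _ z 1] by simp
  have lb: "- q (\<lambda>\<omega>. - x \<omega>) \<le> q (\<lambda>\<omega>. x \<omega> + t * z \<omega>) - t * c" if "x \<in> V" "t \<ge> 0" for x t
  proof -
    have "q (\<lambda>\<omega>. (x \<omega> + t * z \<omega>) + - x \<omega>) \<le> q (\<lambda>\<omega>. x \<omega> + t * z \<omega>) + q (\<lambda>\<omega>. - x \<omega>)"
      using sublin_add[OF sq mem[OF that(1)] lin_neg[OF lin that(1)]] .
    moreover have "q (\<lambda>\<omega>. (x \<omega> + t * z \<omega>) + - x \<omega>) = t * q z"
      using sublin_hom[OF sq z that(2)] by simp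
    moreover have "t * c \<le> t * q z" using c that(2) by (simp add: mult_left_mono)
    ultimately show ?thesis by linarith
  qed
  have ne: "{q (\<lambda>\<omega>. x \<omega> + t * z \<omega>) - t * c | t. t \<ge> 0} \<noteq> {}" for x by auto
  have bdd: "bdd_below {q (\<lambda>\<omega>. x \<omega> + t * z \<omega>) - t * c | t. t \<ge> 0}" if "x \<in> V" for x
    unfolding bdd_below_def using lb[OF that] by blast
  have low: "r x \<le> q (\<lambda>\<omega>. x \<omega> + t * z \<omega>) - t * c" if "x \<in> V" "t \<ge> 0" for x t
    unfolding r_def by (rule cInf_lower[OF _ bdd[OF that(1)]]) (use that in auto)
  have great: "y \<le> r x" if "x \<in> V" "\<And>t. t \<ge> 0 \<Longrightarrow> y \<le> q (\<lambda>\<omega>. x \<omega> + t * z \<omega>) - t * c" for x y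
    unfolding r_def by (rule cInf_greatest[OF ne]) (use that in auto)
  show le: "r x \<le> q x" if "x \<in> V" for x
    using low[OF that, of 0] by simp
  show "r (\<lambda>\<omega>. - z \<omega>) \<le> - c"
    using low[OF lin_neg[OF lin z], of 1] sublin_zero[OF sq z] by simp
  show "sublin V r"
    unfolding sublin_def
  proof (intro conjI ballI allI impI)
    fix x y assume x: "x \<in> V" and y: "y \<in> V"
    have sumb: "r (\<lambda>\<omega>. x \<omega> + y \<omega>) \<le> (q (\<lambda>\<omega>. x \<omega> + t1 * z \<omega>) - t1 * c) + (q (\<lambda>\<omega>. y \<omega> + t2 * z \<omega>) - t2 * c)"
      if "t1 \<ge> 0" "t2 \<ge> 0" for t1 t2
    proof -
      have "r (\<lambda>\<omega>. x \<omega> + y \<omega>) \<le> q (\<lambda>\<omega>. (x \<omega> + y \<omega>) + (t1 + t2) * z \<omega>) - (t1 + t2) * c"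
        using low[OF lin_add[OF lin x y]] that by simp
      also have "(\<lambda>\<omega>. (x \<omega> + y \<omega>) + (t1 + t2) * z \<omega>) = (\<lambda>\<omega>. (x \<omega> + t1 * z \<omega>) + (y \<omega> + t2 * z \<omega>))"
        by (simp add: algebra_simps)
      also have "q \<dots> \<le> q (\<lambda>\<omega>. x \<omega> + t1 * z \<omega>) + q (\<lambda>\<omega>. y \<omega> + t2 * z \<omega>)"
        using sublin_add[OF sq mem[OF x] mem[OF y]] .
      finally show ?thesis by (simp add: algebra_simps)
    qed
    have "r (\<lambda>\<omega>. x \<omega> + y \<omega>) - (q (\<lambda>\<omega>. y \<omega> + t2 * z \<omega>) - t2 * c) \<le> r x" if t2: "t2 \<ge> 0" for t2
    proof (rule great[OF x])
      fix t1 :: real assume "t1 \<ge> 0"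
      from sumb[OF this t2] show "r (\<lambda>\<omega>. x \<omega> + y \<omega>) - (q (\<lambda>\<omega>. y \<omega> + t2 * z \<omega>) - t2 * c) \<le> q (\<lambda>\<omega>. x \<omega> + t1 * z \<omega>) - t1 * c"
        by linarith
    qed
    then have "\<And>t2. t2 \<ge> 0 \<Longrightarrow> r (\<lambda>\<omega>. x \<omega> + y \<omega>) - r x \<le> q (\<lambda>\<omega>. y \<omega> + t2 * z \<omega>) - t2 * c"
      by (auto simp: algebra_simps)
    then have "r (\<lambda>\<omega>. x \<omega> + y \<omega>) - r x \<le> r y" by (intro great[OF y])
    then show "r (\<lambda>\<omega>. x \<omega> + y \<omega>) \<le> r x + r y" by simp
  next
    fix x and s :: real assume x: "x \<in> V" and s: "s \<ge> 0"
    show "r (\<lambda>\<omega>. s * x \<omega>) = s * r x"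
    proof (cases "s = 0")
      case True
      have "r (\<lambda>\<omega>. 0) \<le> 0" using low[OF lin_zero[OF lin x], of 0] sublin_zero[OF sq x] by simp
      moreover have "0 \<le> r (\<lambda>\<omega>. 0)"
      proof (rule great[OF lin_zero[OF lin x]])
        fix t :: real assume t: "t \<ge> 0"
        have "q (\<lambda>\<omega>. t * z \<omega>) - t * c \<ge> 0" using sublin_hom[OF sq z t] c t
          by (simp add: mult_left_mono)
        then show "0 \<le> q (\<lambda>\<omega>. 0 + t * z \<omega>) - t * c" by simp
      qed
      ultimately show ?thesis using True by simp
    next
      case False
      then have sp: "s > 0" using s by simp
      have eq: "q (\<lambda>\<omega>. s * x \<omega> + (s * t) * z \<omega>) - (s * t) * c = s * (q (\<lambda>\<omega>. x \<omega> + t * z \<omega>) - t * c)" for t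
      proof -
        have e1: "(\<lambda>\<omega>. s * x \<omega> + (s * t) * z \<omega>) = (\<lambda>\<omega>. s * (x \<omega> + t * z \<omega>))" by (simp add: algebra_simps)
        have "q (\<lambda>\<omega>. s * x \<omega> + (s * t) * z \<omega>) = s * q (\<lambda>\<omega>. x \<omega> + t * z \<omega>)"
          unfolding e1 by (rule sublin_hom[OF sq mem[OF x] s])
        then show ?thesis by (simp add: right_diff_distrib mult.assoc)
      qed
      have A: "r (\<lambda>\<omega>. s * x \<omega>) / s \<le> r x"
      proof (rule great[OF x])
        fix t :: real assume "t \<ge> 0"
        then have "r (\<lambda>\<omega>. s * x \<omega>) \<le> s * (q (\<lambda>\<omega>. x \<omega> + t * z \<omega>) - t * c)"
          using low[OF lin_smul[OF lin x, of s], of "s * t"] eq[of t] sp \<open>t \<ge> 0\<close> by simp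
        then show "r (\<lambda>\<omega>. s * x \<omega>) / s \<le> q (\<lambda>\<omega>. x \<omega> + t * z \<omega>) - t * c"
          using sp by (simp add: divide_le_eq mult.commute)
      qed
      have B: "s * r x \<le> r (\<lambda>\<omega>. s * x \<omega>)"
      proof (rule great[OF lin_smul[OF lin x]])
        fix t :: real assume t: "t \<ge> 0"
        have "r x \<le> q (\<lambda>\<omega>. x \<omega> + (t / s) * z \<omega>) - (t / s) * c" using low[OF x, of "t / s"] t sp by simp
        then have "s * r x \<le> s * (q (\<lambda>\<omega>. x \<omega> + (t / s) * z \<omega>) - (t / s) * c)"
          using sp by simp
        also have "\<dots> = q (\<lambda>\<omega>. s * x \<omega> + t * z \<omega>) - t * c"
          using eq[of "t / s"] sp by simp
        finally show "s * r x \<le> q (\<lambda>\<omega>. s * x \<omega> + t * z \<omega>) - t * c" .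
      qed
      have "r (\<lambda>\<omega>. s * x \<omega>) = s * (r (\<lambda>\<omega>. s * x \<omega>) / s)" using sp by simp
      also have "\<dots> \<le> s * r x" using A sp by (intro mult_left_mono) auto
      finally show ?thesis using B by linarith
    qed
  qed
qed



lemma sublin_neg_linf:
  assumes lin: "lin V" and sq: "sublin V q" and neg: "\<And>z. z \<in> V \<Longrightarrow> q (\<lambda>\<omega>. - z \<omega>) = - q z"
  shows "linf V q"
proof -
  have hom: "q (\<lambda>\<omega>. a * x \<omega>) = a * q x" if "x \<in> V" for x a
  proof (cases "a \<ge> 0")
    case True then show ?thesis using sublin_hom[OF sq that] by blast
  next
    case False
    have "(\<lambda>\<omega>. a * x \<omega>) = (\<lambda>\<omega>. (- a) * (- x \<omega>))" by simp
    then have "q (\<lambda>\<omega>. a * x \<omega>) = (- a) * q (\<lambda>\<omega>. - x \<omega>)"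
      using sublin_hom[OF sq lin_neg[OF lin that], of "- a"] False by simp
    then show ?thesis using neg[OF that] by simp
  qed
  show ?thesis unfolding linf_def
  proof (intro ballI allI)
    fix x y a b assume x: "x \<in> V" and y: "y \<in> V"
    have ax: "(\<lambda>\<omega>. a * x \<omega>) \<in> V" and by': "(\<lambda>\<omega>. b * y \<omega>) \<in> V"
      using lin_smul[OF lin x] lin_smul[OF lin y] by auto
    have max: "(\<lambda>\<omega>. (- a) * x \<omega>) \<in> V" and mby: "(\<lambda>\<omega>. (- b) * y \<omega>) \<in> V"
      by (rule lin_smul[OF lin x], rule lin_smul[OF lin y])
    have "q (\<lambda>\<omega>. a * x \<omega> + b * y \<omega>) \<le> q (\<lambda>\<omega>. a * x \<omega>) + q (\<lambda>\<omega>. b * y \<omega>)"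
      using sublin_add[OF sq ax by'] by simp
    then have le: "q (\<lambda>\<omega>. a * x \<omega> + b * y \<omega>) \<le> a * q x + b * q y" using hom x y by simp
    have "q (\<lambda>\<omega>. (- a) * x \<omega> + (- b) * y \<omega>) \<le> q (\<lambda>\<omega>. (- a) * x \<omega>) + q (\<lambda>\<omega>. (- b) * y \<omega>)"
      using sublin_add[OF sq max mby] by simp
    then have "q (\<lambda>\<omega>. (- a) * x \<omega> + (- b) * y \<omega>) \<le> - a * q x - b * q y" using hom[OF x, of "- a"] hom[OF y, of "- b"] by simp
    moreover have "(\<lambda>\<omega>. (- a) * x \<omega> + (- b) * y \<omega>) = (\<lambda>\<omega>. - (a * x \<omega> + b * y \<omega>))" by simp
    ultimately have "- q (\<lambda>\<omega>. a * x \<omega> + b * y \<omega>) \<le> - a * q x - b * q y"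
      using neg[OF lin_comb[OF lin x y, of a b]] by simp
    then show "q (\<lambda>\<omega>. a * x \<omega> + b * y \<omega>) = a * q x + b * q y" using le by linarith
  qed
qed

lemma minimal_linf:
  assumes lin: "lin V" and sq: "sublin V q"
    and min: "\<And>q'. sublin V q' \<Longrightarrow> (\<forall>x\<in>V. q' x \<le> q x) \<Longrightarrow> (\<forall>x\<in>V. q' x = q x)"
  shows "linf V q"
proof (rule sublin_neg_linf[OF lin sq])
  fix z assume z: "z \<in> V"
  define r where "r = (\<lambda>x. Inf {q (\<lambda>\<omega>. x \<omega> + t * z \<omega>) - t * q z | t. t \<ge> 0})"
  have r1: "sublin V r" and r2: "\<And>x. x \<in> V \<Longrightarrow> r x \<le> q x" and r3: "r (\<lambda>\<omega>. - z \<omega>) \<le> - q z"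
    using aux_sublin[OF lin sq z order_refl] unfolding r_def by auto
  have "r (\<lambda>\<omega>. - z \<omega>) = q (\<lambda>\<omega>. - z \<omega>)" using min[OF r1] r2 lin_neg[OF lin z] by blast
  then have "q (\<lambda>\<omega>. - z \<omega>) \<le> - q z" using r3 by simp
  moreover have "- q (\<lambda>\<omega>. - z \<omega>) \<le> q z"
  proof -
    have "- q (\<lambda>\<omega>. - (\<lambda>\<omega>. - z \<omega>) \<omega>) \<le> q (\<lambda>\<omega>. - z \<omega>)"
      using sublin_lowb[OF lin sq lin_neg[OF lin z]] .
    then show ?thesis by simp
  qed
  ultimately show "q (\<lambda>\<omega>. - z \<omega>) = - q z" by linarith
qed

lemma HB_sublin:
  assumes lin: "lin V" and ne: "V \<noteq> {}" and sp: "sublin V p"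
  shows "\<exists>g. linf V g \<and> (\<forall>x\<in>V. g x \<le> p x)"
proof -
  define E where "E = (\<lambda>q. {(x, r::real). x \<in> V \<and> q x \<le> r})"
  define F where "F = {q. sublin V q \<and> (\<forall>x\<in>V. q x \<le> p x)}"
  define A where "A = E ` F"
  have Esub: "q2 x \<le> q1 x" if "E q1 \<subseteq> E q2" "x \<in> V" for q1 q2 x
    using that unfolding E_def by auto
  have Esub2: "E q1 \<subseteq> E q2" if "\<forall>x\<in>V. q2 x \<le> q1 x" for q1 q2
    using that unfolding E_def by auto
  obtain v0 where v0: "v0 \<in> V" using ne by auto
  have lowb: "- p (\<lambda>\<omega>. - x \<omega>) \<le> q x" if "q \<in> F" "x \<in> V" for q x
    using sublin_lowb[OF lin _ that(2), of q] that lin_neg[OF lin that(2)] unfolding F_def by force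
  have "\<forall>C\<in>chains A. \<exists>U\<in>A. \<forall>X\<in>C. X \<subseteq> U"
  proof
    fix C assume C: "C \<in> chains A"
    show "\<exists>U\<in>A. \<forall>X\<in>C. X \<subseteq> U"
    proof (cases "C = {}")
      case True
      have "p \<in> F" using sp unfolding F_def by auto
      then show ?thesis using True unfolding A_def by auto
    next
      case False
      define Q where "Q = {q. q \<in> F \<and> E q \<in> C}"
      have CA: "C \<subseteq> A" using C unfolding chains_def by auto
      have Qne: "Q \<noteq> {}" using False CA unfolding Q_def A_def by auto
      have chainQ: "(\<forall>x\<in>V. q2 x \<le> q1 x) \<or> (\<forall>x\<in>V. q1 x \<le> q2 x)" if "q1 \<in> Q" "q2 \<in> Q" for q1 q2
        using chainsD[OF C, of "E q1" "E q2"] that Esub unfolding Q_def by blast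
      define r where "r = (\<lambda>x. Inf ((\<lambda>q. q x) ` Q))"
      have bdd: "bdd_below ((\<lambda>q. q x) ` Q)" if "x \<in> V" for x
        unfolding bdd_below_def using lowb[OF _ that] unfolding Q_def by blast
      have low: "r x \<le> q x" if "x \<in> V" "q \<in> Q" for x q
        unfolding r_def using cInf_lower[OF _ bdd[OF that(1)]] that by auto
      have great: "y \<le> r x" if "\<And>q. q \<in> Q \<Longrightarrow> y \<le> q x" for x y
        unfolding r_def using Qne that by (intro cInf_greatest) auto
      have QF: "q \<in> F" if "q \<in> Q" for q using that unfolding Q_def by auto
      have rsub: "sublin V r" unfolding sublin_def
      proof (intro conjI ballI allI impI)
        fix x y assume x: "x \<in> V" and y: "y \<in> V"
        have xy: "(\<lambda>\<omega>. x \<omega> + y \<omega>) \<in> V" using lin_add[OF lin x y] .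
        have key: "r (\<lambda>\<omega>. x \<omega> + y \<omega>) \<le> q1 x + q2 y" if "q1 \<in> Q" "q2 \<in> Q" for q1 q2
        proof (cases "\<forall>x\<in>V. q2 x \<le> q1 x")
          case True
          have "r (\<lambda>\<omega>. x \<omega> + y \<omega>) \<le> q2 (\<lambda>\<omega>. x \<omega> + y \<omega>)" using low[OF xy that(2)] .
          also have "\<dots> \<le> q2 x + q2 y" using sublin_add[OF _ x y, of q2] QF[OF that(2)] unfolding F_def by auto
          also have "\<dots> \<le> q1 x + q2 y" using True x by auto
          finally show ?thesis .
        next
          case False
          then have T: "\<forall>x\<in>V. q1 x \<le> q2 x" using chainQ[OF that] by blast
          have "r (\<lambda>\<omega>. x \<omega> + y \<omega>) \<le> q1 (\<lambda>\<omega>. x \<omega> + y \<omega>)" using low[OF xy that(1)] .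
          also have "\<dots> \<le> q1 x + q1 y" using sublin_add[OF _ x y, of q1] QF[OF that(1)] unfolding F_def by auto
          also have "\<dots> \<le> q1 x + q2 y" using T y by auto
          finally show ?thesis .
        qed
        have "r (\<lambda>\<omega>. x \<omega> + y \<omega>) - q2 y \<le> r x" if "q2 \<in> Q" for q2
          using key[OF _ that] by (intro great) (auto simp: algebra_simps)
        then have "r (\<lambda>\<omega>. x \<omega> + y \<omega>) - r x \<le> r y"
          by (intro great) (auto simp: algebra_simps)
        then show "r (\<lambda>\<omega>. x \<omega> + y \<omega>) \<le> r x + r y" by simp
      next
        fix x and s :: real assume x: "x \<in> V" and s: "s \<ge> 0"
        have sx: "(\<lambda>\<omega>. s * x \<omega>) \<in> V" using lin_smul[OF lin x] .
        have hq: "q (\<lambda>\<omega>. s * x \<omega>) = s * q x" if "q \<in> Q" for q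
          using sublin_hom[OF _ x s, of q] QF[OF that] unfolding F_def by auto
        show "r (\<lambda>\<omega>. s * x \<omega>) = s * r x"
        proof (cases "s = 0")
          case True
          have h0: "q (\<lambda>\<omega>. 0) = 0" if "q \<in> Q" for q
            using sublin_zero[OF _ x, of q] QF[OF that] unfolding F_def by auto
          have "r (\<lambda>\<omega>. s * x \<omega>) = Inf ((\<lambda>q. 0::real) ` Q)" unfolding r_def using h0 True
            by (intro arg_cong[where f=Inf] image_cong) auto
          then show ?thesis using Qne True by simp
        next
          case False
          then have spos: "s > 0" using s by simp
          have A1: "r (\<lambda>\<omega>. s * x \<omega>) / s \<le> r x"
          proof (rule great)
            fix q assume q: "q \<in> Q"
            have "r (\<lambda>\<omega>. s * x \<omega>) \<le> s * q x" using low[OF sx q] hq[OF q] by simp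
            then show "r (\<lambda>\<omega>. s * x \<omega>) / s \<le> q x" using spos by (simp add: divide_le_eq mult.commute)
          qed
          have B1: "s * r x \<le> r (\<lambda>\<omega>. s * x \<omega>)"
          proof (rule great)
            fix q assume q: "q \<in> Q"
            have "s * r x \<le> s * q x" using low[OF x q] spos by simp
            then show "s * r x \<le> q (\<lambda>\<omega>. s * x \<omega>)" using hq[OF q] by simp
          qed
          have "r (\<lambda>\<omega>. s * x \<omega>) = s * (r (\<lambda>\<omega>. s * x \<omega>) / s)" using spos by simp
          also have "\<dots> \<le> s * r x" using A1 spos by (intro mult_left_mono) auto
          finally show ?thesis using B1 by linarith
        qed
      qed
      have rF: "r \<in> F" unfolding F_def
      proof (intro CollectI conjI ballI rsub)
        fix x assume x: "x \<in> V"
        obtain q where q: "q \<in> Q" using Qne by auto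
        then show "r x \<le> p x" using low[OF x q] QF[OF q] x unfolding F_def by force
      qed
      show ?thesis
      proof (intro bexI ballI)
        show "E r \<in> A" using rF unfolding A_def by auto
        fix X assume X: "X \<in> C"
        then obtain q where q: "q \<in> F" "X = E q" using CA unfolding A_def by auto
        then have "q \<in> Q" using X unfolding Q_def by auto
        then have "\<forall>x\<in>V. r x \<le> q x" using low by blast
        then show "X \<subseteq> E r" using q(2) Esub2 by blast
      qed
    qed
  qed
  from Zorn_Lemma2[OF this] obtain M where M: "M \<in> A" "\<forall>X\<in>A. M \<subseteq> X \<longrightarrow> X = M" by blast
  then obtain q where q: "q \<in> F" "M = E q" unfolding A_def by auto
  have "linf V q"
  proof (rule minimal_linf[OF lin])
    show "sublin V q" using q unfolding F_def by auto
    fix q' assume s': "sublin V q'" and le: "\<forall>x\<in>V. q' x \<le> q x"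
    have "q' \<in> F" using s' le q unfolding F_def by force
    then have "E q' = E q" using M q Esub2[OF le] unfolding A_def by auto
    then show "\<forall>x\<in>V. q' x = q x" using le Esub[of q' q] by (metis order_antisym order_refl)
  qed
  then show ?thesis using q unfolding F_def by auto
qed



lemma lctvs_top: "lctvs V T \<Longrightarrow> topspace T = V"
  unfolding lctvs_def by blast
lemma lctvs_ne: "lctvs V T \<Longrightarrow> V \<noteq> {}"
  unfolding lctvs_def by blast
lemma lctvs_lin: "lctvs V T \<Longrightarrow> lin V"
  unfolding lctvs_def lin_def by blast
lemma lctvs_add: "lctvs V T \<Longrightarrow> continuous_map (prod_topology T T) T (\<lambda>(x, y). \<lambda>\<omega>. x \<omega> + y \<omega>)"
  unfolding lctvs_def by blast
lemma lctvs_mul: "lctvs V T \<Longrightarrow> continuous_map (prod_topology euclideanreal T) T (\<lambda>(a, x). \<lambda>\<omega>. a * x \<omega>)"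
  unfolding lctvs_def by blast
lemma lctvs_loc: "lctvs V T \<Longrightarrow> openin T U \<Longrightarrow> x \<in> U \<Longrightarrow> \<exists>W. openin T W \<and> convex_fun_set W \<and> x \<in> W \<and> W \<subseteq> U"
  unfolding lctvs_def by blast

lemma cont_affine:
  assumes L: "lctvs V T" and u: "u \<in> V"
  shows "continuous_map T T (\<lambda>v. \<lambda>\<omega>. c * (v \<omega> - u \<omega>))"
proof -
  have mu: "(\<lambda>\<omega>. -1 * u \<omega>) \<in> V" using lin_smul[OF lctvs_lin[OF L] u] .
  have f1: "continuous_map T (prod_topology T T) (\<lambda>v. (id v, (\<lambda>\<omega>. -1 * u \<omega>)))"
    using mu by (intro continuous_map_pairedI continuous_map_id) (simp_all add: lctvs_top[OF L])
  have f2: "continuous_map T T ((\<lambda>(x, y). \<lambda>\<omega>. x \<omega> + y \<omega>) \<circ> (\<lambda>v. (id v, (\<lambda>\<omega>. -1 * u \<omega>))))"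
    using continuous_map_compose[OF f1 lctvs_add[OF L]] .
  have f3: "continuous_map T (prod_topology euclideanreal T)
      (\<lambda>v. ((\<lambda>_. c) v, ((\<lambda>(x, y). \<lambda>\<omega>. x \<omega> + y \<omega>) \<circ> (\<lambda>v. (id v, (\<lambda>\<omega>. -1 * u \<omega>)))) v))"
    by (intro continuous_map_pairedI f2) simp
  note f4 = continuous_map_compose[OF f3 lctvs_mul[OF L]]
  show ?thesis
    by (rule continuous_map_eq[OF f4]) (auto simp: fun_eq_iff algebra_simps)
qed

lemma convexD:
  assumes "convex_fun_set W" "y \<in> W" "z \<in> W" "0 \<le> t" "t \<le> 1"
  shows "(\<lambda>\<omega>. t * y \<omega> + (1 - t) * z \<omega>) \<in> W"
  using assms unfolding convex_fun_set_def by blast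

lemma cont_ray:
  assumes L: "lctvs V T" and v: "v \<in> V"
  shows "continuous_map euclideanreal T (\<lambda>s. \<lambda>\<omega>. s * v \<omega>)"
proof -
  have f1: "continuous_map euclideanreal (prod_topology euclideanreal T) (\<lambda>s. (id s, v))"
    using v by (intro continuous_map_pairedI continuous_map_id) (simp_all add: lctvs_top[OF L])
  note f2 = continuous_map_compose[OF f1 lctvs_mul[OF L]]
  show ?thesis by (rule continuous_map_eq[OF f2]) auto
qed

lemma open_ray_set:
  assumes L: "lctvs V T" and v: "v \<in> V" and G: "openin T G" and s0: "(\<lambda>\<omega>. s0 * v \<omega>) \<in> G"
  shows "\<exists>e>0. \<forall>s. \<bar>s - s0\<bar> < e \<longrightarrow> (\<lambda>\<omega>. s * v \<omega>) \<in> G"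
proof -
  have "openin euclideanreal {s \<in> topspace euclideanreal. (\<lambda>\<omega>. s * v \<omega>) \<in> G}"
    by (rule openin_continuous_map_preimage[OF cont_ray[OF L v] G])
  then have "open {s. (\<lambda>\<omega>. s * v \<omega>) \<in> G}" by simp
  then obtain e where "e > 0" "\<forall>y. dist y s0 < e \<longrightarrow> y \<in> {s. (\<lambda>\<omega>. s * v \<omega>) \<in> G}"
    using s0 unfolding open_dist by blast
  then show ?thesis by (auto simp: dist_real_def)
qed

lemma linf_add_smul:
  assumes "linf V g" "x \<in> V" "y \<in> V"
  shows "g (\<lambda>\<omega>. x \<omega> + c * y \<omega>) = g x + c * g y"
proof -
  have "g (\<lambda>\<omega>. 1 * x \<omega> + c * y \<omega>) = 1 * g x + c * g y"
    using assms unfolding linf_def by blast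
  then show ?thesis by simp
qed

lemma linf_diff:
  assumes "linf V g" "x \<in> V" "y \<in> V"
  shows "g (\<lambda>\<omega>. x \<omega> - y \<omega>) = g x - g y"
  using linf_add_smul[OF assms, of "-1"] by simp

lemma minkowski:
  assumes L: "lctvs V T" and Go: "openin T G" and Gc: "convex_fun_set G" and G0: "(\<lambda>\<omega>. 0) \<in> G"
    and d0: "d0 \<in> V" and d0G: "d0 \<notin> G"
  shows "\<exists>g. linf V g \<and> continuous_map T euclideanreal g \<and> 1 \<le> g d0 \<and> (\<forall>v\<in>G. g v < 1)"
proof -
  have lin: "lin V" using lctvs_lin[OF L] .
  have GV: "G \<subseteq> V" using openin_subset[OF Go] lctvs_top[OF L] by simp
  define Sv where "Sv = (\<lambda>v. {t::real. t > 0 \<and> (\<lambda>\<omega>. (1 / t) * v \<omega>) \<in> G})"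
  define p where "p = (\<lambda>v. Inf (Sv v))"
  have Sne: "Sv v \<noteq> {}" if v: "v \<in> V" for v
  proof -
    have "(\<lambda>\<omega>. 0 * v \<omega>) \<in> G" using G0 by simp
    then obtain e where e: "e > 0" "\<forall>s. \<bar>s - 0\<bar> < e \<longrightarrow> (\<lambda>\<omega>. s * v \<omega>) \<in> G"
      using open_ray_set[OF L v Go] by blast
    have "(\<lambda>\<omega>. (e / 2) * v \<omega>) \<in> G" using e(2)[rule_format, of "e / 2"] e(1) by simp
    moreover have "(\<lambda>\<omega>. (1 / (2 / e)) * v \<omega>) = (\<lambda>\<omega>. (e / 2) * v \<omega>)" by simp
    ultimately have "2 / e \<in> Sv v" using e(1) unfolding Sv_def by (simp only: mem_Collect_eq) simp
    then show ?thesis by blast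
  qed
  have Sbdd: "bdd_below (Sv v)" for v
    unfolding bdd_below_def Sv_def by (rule exI[of _ 0]) auto
  have plow: "p v \<le> t" if "t \<in> Sv v" for v t
    unfolding p_def using cInf_lower[OF that Sbdd] .
  have pgreat: "y \<le> p v" if "v \<in> V" "\<And>t. t \<in> Sv v \<Longrightarrow> y \<le> t" for v y
    unfolding p_def using cInf_greatest[OF Sne[OF that(1)]] that(2) by blast
  have pnn: "0 \<le> p v" if "v \<in> V" for v
    using pgreat[OF that] unfolding Sv_def by auto
  have pG: "p v < 1" if v: "v \<in> G" for v
  proof -
    have vV: "v \<in> V" using v GV by auto
    have "(\<lambda>\<omega>. 1 * v \<omega>) \<in> G" using v by simp
    then obtain e where e: "e > 0" "\<forall>s. \<bar>s - 1\<bar> < e \<longrightarrow> (\<lambda>\<omega>. s * v \<omega>) \<in> G"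
      using open_ray_set[OF L vV Go] by blast
    have "(\<lambda>\<omega>. (1 + e / 2) * v \<omega>) \<in> G" using e(2)[rule_format, of "1 + e / 2"] e(1) by simp
    moreover have "(\<lambda>\<omega>. (1 / (1 / (1 + e / 2))) * v \<omega>) = (\<lambda>\<omega>. (1 + e / 2) * v \<omega>)" by simp
    ultimately have "1 / (1 + e / 2) \<in> Sv v" using e(1) unfolding Sv_def by (simp only: mem_Collect_eq) simp
    then have "p v \<le> 1 / (1 + e / 2)" by (rule plow)
    also have "\<dots> < 1" using e(1) by simp
    finally show ?thesis .
  qed
  have pd0: "1 \<le> p d0"
  proof (rule ccontr)
    assume "\<not> 1 \<le> p d0"
    then have "Inf (Sv d0) < 1" unfolding p_def by simp
    then obtain t where t: "t \<in> Sv d0" "t < 1" using cInf_lessD[OF Sne[OF d0]] by blast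
    then have tp: "t > 0" and tG: "(\<lambda>\<omega>. (1 / t) * d0 \<omega>) \<in> G" unfolding Sv_def by auto
    have "(\<lambda>\<omega>. t * ((1 / t) * d0 \<omega>) + (1 - t) * 0) \<in> G"
      using convexD[OF Gc tG G0, of t] tp t(2) by simp
    then have "d0 \<in> G" using tp by simp
    then show False using d0G by blast
  qed
  have psub: "sublin V p" unfolding sublin_def
  proof (intro conjI ballI allI impI)
    fix x y assume x: "x \<in> V" and y: "y \<in> V"
    have xy: "(\<lambda>\<omega>. x \<omega> + y \<omega>) \<in> V" using lin_add[OF lin x y] .
    have key: "p (\<lambda>\<omega>. x \<omega> + y \<omega>) \<le> t1 + t2" if t1: "t1 \<in> Sv x" and t2: "t2 \<in> Sv y" for t1 t2
    proof (rule plow)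
      have p1: "t1 > 0" "(\<lambda>\<omega>. (1 / t1) * x \<omega>) \<in> G" using t1 unfolding Sv_def by auto
      have p2: "t2 > 0" "(\<lambda>\<omega>. (1 / t2) * y \<omega>) \<in> G" using t2 unfolding Sv_def by auto
      define th where "th = t1 / (t1 + t2)"
      have th: "0 \<le> th" "th \<le> 1" using p1 p2 unfolding th_def by (simp_all add: divide_le_eq)
      have "(\<lambda>\<omega>. th * ((1 / t1) * x \<omega>) + (1 - th) * ((1 / t2) * y \<omega>)) \<in> G"
        using convexD[OF Gc p1(2) p2(2) th] .
      moreover have "(\<lambda>\<omega>. th * ((1 / t1) * x \<omega>) + (1 - th) * ((1 / t2) * y \<omega>))
          = (\<lambda>\<omega>. (1 / (t1 + t2)) * (x \<omega> + y \<omega>))"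
      proof -
        have "1 - th = t2 / (t1 + t2)" using p1 p2 unfolding th_def by (simp add: field_simps)
        then have e2: "(1 - th) * ((1 / t2) * y w) = y w / (t1 + t2)" for w using p2 by simp
        have e1: "th * ((1 / t1) * x w) = x w / (t1 + t2)" for w using p1 unfolding th_def by simp
        show ?thesis unfolding fun_eq_iff e1 e2 by (simp add: add_divide_distrib)
      qed
      ultimately show "t1 + t2 \<in> Sv (\<lambda>\<omega>. x \<omega> + y \<omega>)" using p1 p2 unfolding Sv_def by auto
    qed
    have "p (\<lambda>\<omega>. x \<omega> + y \<omega>) - t2 \<le> p x" if "t2 \<in> Sv y" for t2
      using key[OF _ that] by (intro pgreat[OF x]) (auto simp: algebra_simps)
    then have "p (\<lambda>\<omega>. x \<omega> + y \<omega>) - p x \<le> p y"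
      by (intro pgreat[OF y]) (auto simp: algebra_simps)
    then show "p (\<lambda>\<omega>. x \<omega> + y \<omega>) \<le> p x + p y" by simp
  next
    fix x and s :: real assume x: "x \<in> V" and s: "s \<ge> 0"
    have sx: "(\<lambda>\<omega>. s * x \<omega>) \<in> V" using lin_smul[OF lin x] .
    show "p (\<lambda>\<omega>. s * x \<omega>) = s * p x"
    proof (cases "s = 0")
      case True
      have "Sv (\<lambda>\<omega>. s * x \<omega>) = {0<..}" using True G0 unfolding Sv_def by auto
      then show ?thesis using True unfolding p_def by simp
    next
      case False
      then have sp: "s > 0" using s by simp
      have m1: "s * t \<in> Sv (\<lambda>\<omega>. s * x \<omega>)" if "t \<in> Sv x" for t
      proof -
        have eq: "(\<lambda>\<omega>. (1 / (s * t)) * (s * x \<omega>)) = (\<lambda>\<omega>. (1 / t) * x \<omega>)" using sp by (auto simp: fun_eq_iff)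
        show ?thesis using that sp unfolding Sv_def mem_Collect_eq eq by simp
      qed
      have m2: "t / s \<in> Sv x" if "t \<in> Sv (\<lambda>\<omega>. s * x \<omega>)" for t
      proof -
        have eq: "(\<lambda>\<omega>. (1 / (t / s)) * x \<omega>) = (\<lambda>\<omega>. (1 / t) * (s * x \<omega>))" using sp by (auto simp: fun_eq_iff)
        show ?thesis using that sp unfolding Sv_def mem_Collect_eq eq by simp
      qed
      have A1: "p (\<lambda>\<omega>. s * x \<omega>) / s \<le> p x"
      proof (rule pgreat[OF x])
        fix t assume "t \<in> Sv x"
        then have "p (\<lambda>\<omega>. s * x \<omega>) \<le> s * t" using plow m1 by blast
        then show "p (\<lambda>\<omega>. s * x \<omega>) / s \<le> t" using sp by (simp add: divide_le_eq mult.commute)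
      qed
      have B1: "s * p x \<le> p (\<lambda>\<omega>. s * x \<omega>)"
      proof (rule pgreat[OF sx])
        fix t assume "t \<in> Sv (\<lambda>\<omega>. s * x \<omega>)"
        then have "p x \<le> t / s" using plow m2 by blast
        then show "s * p x \<le> t" using sp by (simp add: le_divide_eq mult.commute)
      qed
      have "p (\<lambda>\<omega>. s * x \<omega>) = s * (p (\<lambda>\<omega>. s * x \<omega>) / s)" using sp by simp
      also have "\<dots> \<le> s * p x" using A1 sp by (intro mult_left_mono) auto
      finally show ?thesis using B1 by linarith
    qed
  qed
  note aux = aux_sublin[where V=V and q=p and z=d0 and c=1, OF lin psub d0 pd0]
  define r where "r = (\<lambda>x. Inf {p (\<lambda>\<omega>. x \<omega> + t * d0 \<omega>) - t * 1 | t. t \<ge> 0})"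
  have r1: "sublin V r" unfolding r_def by (rule aux(1))
  have r2: "r x \<le> p x" if "x \<in> V" for x unfolding r_def by (rule aux(2)[OF that])
  have r3: "r (\<lambda>\<omega>. - d0 \<omega>) \<le> - 1" unfolding r_def by (rule aux(3))
  obtain g where g: "linf V g" "\<forall>x\<in>V. g x \<le> r x"
    using HB_sublin[OF lin lctvs_ne[OF L] r1] by blast
  have gp: "g x \<le> p x" if "x \<in> V" for x using g(2) r2 that by force
  have "g (\<lambda>\<omega>. (-1) * d0 \<omega> + 0 * d0 \<omega>) = (-1) * g d0 + 0 * g d0"
    using g(1) d0 unfolding linf_def by blast
  then have "g (\<lambda>\<omega>. - d0 \<omega>) = - g d0" by simp
  then have gd0: "1 \<le> g d0" using g(2) r3 lin_neg[OF lin d0] by force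
  have gG: "g v < 1" if "v \<in> G" for v using gp[of v] pG[OF that] GV that by force
  have cont: "continuous_map T euclideanreal g"
    unfolding continuous_map_upper_lower_semicontinuous_lt
  proof (intro allI conjI)
    fix \<alpha> :: real
    show "openin T {x \<in> topspace T. g x < \<alpha>}"
    proof (subst openin_subopen, intro ballI)
      fix u assume "u \<in> {x \<in> topspace T. g x < \<alpha>}"
      then have u: "u \<in> V" "g u < \<alpha>" using lctvs_top[OF L] by auto
      define \<delta> where "\<delta> = \<alpha> - g u"
      have dp: "\<delta> > 0" using u unfolding \<delta>_def by simp
      define N where "N = {v \<in> topspace T. (\<lambda>\<omega>. (1 / \<delta>) * (v \<omega> - u \<omega>)) \<in> G}"
      have "openin T N" unfolding N_def by (rule openin_continuous_map_preimage[OF cont_affine[OF L u(1)] Go])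
      moreover have "u \<in> N" unfolding N_def using u G0 lctvs_top[OF L] by simp
      moreover have "N \<subseteq> {x \<in> topspace T. g x < \<alpha>}"
      proof
        fix v assume "v \<in> N"
        then have v: "v \<in> V" and h: "(\<lambda>\<omega>. (1 / \<delta>) * (v \<omega> - u \<omega>)) \<in> G"
          unfolding N_def using lctvs_top[OF L] by auto
        define h where "h = (\<lambda>\<omega>. (1 / \<delta>) * (v \<omega> - u \<omega>))"
        have hG: "h \<in> G" using h unfolding h_def .
        have "v = (\<lambda>\<omega>. u \<omega> + \<delta> * h \<omega>)" using dp unfolding h_def by (auto simp: fun_eq_iff)
        then have gv: "g v = g u + \<delta> * g h" using linf_add_smul[OF g(1) u(1), of h \<delta>] hG GV by auto
        have "\<delta> * g h < \<delta> * 1" using mult_strict_left_mono[OF gG[OF hG] dp] .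
        then have "g v < g u + \<delta>" using gv by linarith
        then show "v \<in> {x \<in> topspace T. g x < \<alpha>}" using v lctvs_top[OF L] unfolding \<delta>_def by auto
      qed
      ultimately show "\<exists>N. openin T N \<and> u \<in> N \<and> N \<subseteq> {x \<in> topspace T. g x < \<alpha>}" by blast
    qed
  next
    fix \<alpha> :: real
    show "openin T {x \<in> topspace T. \<alpha> < g x}"
    proof (subst openin_subopen, intro ballI)
      fix u assume "u \<in> {x \<in> topspace T. \<alpha> < g x}"
      then have u: "u \<in> V" "\<alpha> < g u" using lctvs_top[OF L] by auto
      define \<delta> where "\<delta> = g u - \<alpha>"
      have dp: "\<delta> > 0" using u unfolding \<delta>_def by simp
      define N where "N = {v \<in> topspace T. (\<lambda>\<omega>. (- 1 / \<delta>) * (v \<omega> - u \<omega>)) \<in> G}"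
      have "openin T N" unfolding N_def by (rule openin_continuous_map_preimage[OF cont_affine[OF L u(1)] Go])
      moreover have "u \<in> N" unfolding N_def using u G0 lctvs_top[OF L] by simp
      moreover have "N \<subseteq> {x \<in> topspace T. \<alpha> < g x}"
      proof
        fix v assume "v \<in> N"
        then have v: "v \<in> V" and h: "(\<lambda>\<omega>. (- 1 / \<delta>) * (v \<omega> - u \<omega>)) \<in> G"
          unfolding N_def using lctvs_top[OF L] by auto
        define h where "h = (\<lambda>\<omega>. (- 1 / \<delta>) * (v \<omega> - u \<omega>))"
        have hG: "h \<in> G" using h unfolding h_def .
        have "v = (\<lambda>\<omega>. u \<omega> + (- \<delta>) * h \<omega>)" using dp unfolding h_def by (auto simp: fun_eq_iff)
        then have gv: "g v = g u + (- \<delta>) * g h" using linf_add_smul[OF g(1) u(1), of h "- \<delta>"] hG GV by auto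
        have "\<delta> * g h < \<delta> * 1" using mult_strict_left_mono[OF gG[OF hG] dp] .
        then have "g v > g u - \<delta>" using gv by linarith
        then show "v \<in> {x \<in> topspace T. \<alpha> < g x}" using v lctvs_top[OF L] unfolding \<delta>_def by auto
      qed
      ultimately show "\<exists>N. openin T N \<and> u \<in> N \<and> N \<subseteq> {x \<in> topspace T. \<alpha> < g x}" by blast
    qed
  qed
  show ?thesis using g(1) cont gd0 gG by blast
qed



lemma separation:
  assumes L: "lctvs V T" and Acl: "closedin T A" and Acv: "convex_fun_set A"
    and x0: "x0 \<in> V" and nA: "x0 \<notin> A"
  shows "\<exists>\<psi>. linf V \<psi> \<and> continuous_map T euclideanreal \<psi> \<and> (\<forall>a\<in>A. \<psi> a < \<psi> x0)"
proof (cases "A = {}")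
  case True
  have "linf V (\<lambda>_. 0)" unfolding linf_def by simp
  then show ?thesis using True by (intro exI[of _ "\<lambda>_. 0"]) auto
next
  case False
  then obtain a0 where a0: "a0 \<in> A" by blast
  have lin: "lin V" using lctvs_lin[OF L] .
  have top: "topspace T = V" using lctvs_top[OF L] .
  have AV: "A \<subseteq> V" using closedin_subset[OF Acl] top by simp
  have "openin T (V - A)" using Acl top unfolding closedin_def by simp
  then obtain W where W: "openin T W" "convex_fun_set W" "x0 \<in> W" "W \<subseteq> V - A"
    using lctvs_loc[OF L _ ] x0 nA by blast
  have WV: "W \<subseteq> V" using W(4) by blast
  define G where "G = {v \<in> V. \<exists>a\<in>A. (\<lambda>\<omega>. x0 \<omega> - a0 \<omega> + a \<omega> - v \<omega>) \<in> W}"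
  have a0V: "a0 \<in> V" using a0 AV by blast
  have d0V: "(\<lambda>\<omega>. x0 \<omega> - a0 \<omega>) \<in> V"
    using lin_comb[OF lin x0 a0V, of 1 "-1"] by simp
  have uV: "(\<lambda>\<omega>. x0 \<omega> - a0 \<omega> + a \<omega>) \<in> V" if "a \<in> A" for a
    using lin_add[OF lin d0V, of a] that AV by auto
  have Go: "openin T G"
  proof (subst openin_subopen, intro ballI)
    fix v assume "v \<in> G"
    then obtain a where v: "v \<in> V" and a: "a \<in> A" and w: "(\<lambda>\<omega>. x0 \<omega> - a0 \<omega> + a \<omega> - v \<omega>) \<in> W"
      unfolding G_def by blast
    define N where "N = {v' \<in> topspace T. (\<lambda>\<omega>. (-1) * (v' \<omega> - (x0 \<omega> - a0 \<omega> + a \<omega>))) \<in> W}"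
    have eq: "(\<lambda>\<omega>. (-1) * (v' \<omega> - (x0 \<omega> - a0 \<omega> + a \<omega>))) = (\<lambda>\<omega>. x0 \<omega> - a0 \<omega> + a \<omega> - v' \<omega>)" for v'
      by (simp add: fun_eq_iff)
    have "openin T N" unfolding N_def
      by (rule openin_continuous_map_preimage[OF cont_affine[OF L uV[OF a]] W(1)])
    moreover have "v \<in> N" unfolding N_def eq using v w top by simp
    moreover have "N \<subseteq> G" unfolding N_def eq G_def using a top by auto
    ultimately show "\<exists>N. openin T N \<and> v \<in> N \<and> N \<subseteq> G" by blast
  qed
  have Gc: "convex_fun_set G" unfolding convex_fun_set_def
  proof (intro ballI allI impI)
    fix y z and t :: real assume y: "y \<in> G" and z: "z \<in> G" and t: "0 \<le> t \<and> t \<le> 1"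
    obtain a1 where y1: "y \<in> V" "a1 \<in> A" "(\<lambda>\<omega>. x0 \<omega> - a0 \<omega> + a1 \<omega> - y \<omega>) \<in> W"
      using y unfolding G_def by blast
    obtain a2 where z1: "z \<in> V" "a2 \<in> A" "(\<lambda>\<omega>. x0 \<omega> - a0 \<omega> + a2 \<omega> - z \<omega>) \<in> W"
      using z unfolding G_def by blast
    have aA: "(\<lambda>\<omega>. t * a1 \<omega> + (1 - t) * a2 \<omega>) \<in> A" using convexD[OF Acv y1(2) z1(2)] t by blast
    have "(\<lambda>\<omega>. t * (x0 \<omega> - a0 \<omega> + a1 \<omega> - y \<omega>) + (1 - t) * (x0 \<omega> - a0 \<omega> + a2 \<omega> - z \<omega>)) \<in> W"
      using convexD[OF W(2) y1(3) z1(3)] t by blast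
    moreover have "(\<lambda>\<omega>. t * (x0 \<omega> - a0 \<omega> + a1 \<omega> - y \<omega>) + (1 - t) * (x0 \<omega> - a0 \<omega> + a2 \<omega> - z \<omega>))
       = (\<lambda>\<omega>. x0 \<omega> - a0 \<omega> + (t * a1 \<omega> + (1 - t) * a2 \<omega>) - (t * y \<omega> + (1 - t) * z \<omega>))"
      by (simp add: fun_eq_iff algebra_simps)
    ultimately show "(\<lambda>\<omega>. t * y \<omega> + (1 - t) * z \<omega>) \<in> G"
      unfolding G_def using lin_comb[OF lin y1(1) z1(1)] aA by auto
  qed
  have G0: "(\<lambda>\<omega>. 0) \<in> G"
    unfolding G_def using lin_zero[OF lin x0] a0 W(3) by (intro CollectI conjI bexI[of _ a0]) auto
  have d0G: "(\<lambda>\<omega>. x0 \<omega> - a0 \<omega>) \<notin> G"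
  proof
    assume "(\<lambda>\<omega>. x0 \<omega> - a0 \<omega>) \<in> G"
    then obtain a where a: "a \<in> A" "(\<lambda>\<omega>. x0 \<omega> - a0 \<omega> + a \<omega> - (x0 \<omega> - a0 \<omega>)) \<in> W"
      unfolding G_def by blast
    then have "a \<in> W" by simp
    then show False using W(4) a(1) by blast
  qed
  obtain g where g: "linf V g" "continuous_map T euclideanreal g" "1 \<le> g (\<lambda>\<omega>. x0 \<omega> - a0 \<omega>)"
      "\<forall>v\<in>G. g v < 1"
    using minkowski[OF L Go Gc G0 d0V d0G] by blast
  have "g a < g x0" if a: "a \<in> A" for a
  proof -
    have aV: "a \<in> V" using a AV by blast
    have "(\<lambda>\<omega>. a \<omega> - a0 \<omega>) \<in> G"
      unfolding G_def using lin_comb[OF lin aV a0V, of 1 "-1"] a W(3)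
      by (intro CollectI conjI bexI[of _ a]) auto
    then have "g (\<lambda>\<omega>. a \<omega> - a0 \<omega>) < 1" using g(4) by blast
    then have "g a - g a0 < g x0 - g a0" using g(3) linf_diff[OF g(1) aV a0V] linf_diff[OF g(1) x0 a0V] by simp
    then show ?thesis by simp
  qed
  then show ?thesis using g(1,2) by blast
qed



lemma main:
  fixes M :: "'a measure" and C S K :: "('a \<Rightarrow> real) set"
    and \<pi> \<rho>t :: "('a \<Rightarrow> real) \<Rightarrow> real" and Tlog :: "('a \<Rightarrow> real) topology"
    and X :: "'a \<Rightarrow> real"
  assumes "prob_space M"
    and "C \<noteq> {}" and "S \<noteq> {}" and "K \<noteq> {}"
    and CL: "C \<subseteq> L0pp M" and "S \<subseteq> L0pp M" and "K \<subseteq> L0pp M"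
    and divK: "\<forall>Y\<in>C. \<forall>Z\<in>S. rv_div Y Z \<in> K"
    and "is_cone K" and grp: "is_mult_group C"
    and KC: "K \<subseteq> C" and SC: "S \<subseteq> C"
    and pipos: "\<forall>Z\<in>S. 0 < \<pi> Z"
    and L: "lctvs (logset C) Tlog"
    and RRM: "is_RRM M K \<rho>t"
    and qc: "quasi_convex_on (logset C) (rho_log (A_nu K \<rho>t) (logset S) (pi_log \<pi>))"
    and lsc: "lsc_on Tlog (rho_log (A_nu K \<rho>t) (logset S) (pi_log \<pi>))"
    and XC: "X \<in> C"
  shows "MARRM S \<pi> (acc_set K \<rho>t) X =
    (SUP \<phi>\<in>dual_set C Tlog.
       Inf {ereal (\<pi> Z) | Z W. Z \<in> S \<and> W \<in> acc_set K \<rho>t \<and> \<phi> W \<ge> \<phi> X - \<phi> Z})"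
proof -
  define \<rho> where "\<rho> = rho_log (A_nu K \<rho>t) (logset S) (pi_log \<pi>)"
  define V where "V = logset C"
  define I where "I = (\<lambda>\<phi> :: ('a \<Rightarrow> real) \<Rightarrow> real. {ereal (\<pi> Z) | Z W. Z \<in> S \<and> W \<in> acc_set K \<rho>t \<and> \<phi> W \<ge> \<phi> X - \<phi> Z})"
  define m where "m = MARRM S \<pi> (acc_set K \<rho>t) X"
  have pos: "\<And>\<omega>. 0 < Y \<omega>" if "Y \<in> C" for Y using that CL unfolding L0pp_def by auto
  have rhopos: "0 < \<rho>t W" if "W \<in> K" for W using RRM that unfolding is_RRM_def by auto
  have explog: "rv_exp (rv_log Y) = Y" if "Y \<in> C" for Y
    using pos[OF that] by (simp add: rv_exp_def rv_log_def fun_eq_iff)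
  have lin: "lin V" using lctvs_lin[OF L] unfolding V_def .
  have top: "topspace Tlog = V" using lctvs_top[OF L] unfolding V_def .
  have logV: "rv_log Y \<in> V" if "Y \<in> C" for Y using that unfolding V_def logset_def by blast
  have le1: "(SUP \<phi>\<in>dual_set C Tlog. Inf (I \<phi>)) \<le> m"
  proof (rule SUP_least)
    fix \<phi> assume \<phi>: "\<phi> \<in> dual_set C Tlog"
    then have ll: "log_linear C \<phi>" unfolding dual_set_def by blast
    show "Inf (I \<phi>) \<le> m" unfolding m_def MARRM_def
    proof (rule Inf_greatest)
      fix e assume "e \<in> {ereal (\<pi> Z) |Z. Z \<in> S \<and> rv_div X Z \<in> acc_set K \<rho>t}"
      then obtain Z where Z: "e = ereal (\<pi> Z)" "Z \<in> S" "rv_div X Z \<in> acc_set K \<rho>t" by blast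
      have ZC: "Z \<in> C" using Z(2) SC by blast
      have "\<phi> (\<lambda>\<omega>. X \<omega> powr 1 * Z \<omega> powr (-1)) = 1 * \<phi> X + (-1) * \<phi> Z"
        using ll XC ZC unfolding log_linear_def by blast
      moreover have "(\<lambda>\<omega>. X \<omega> powr 1 * Z \<omega> powr (-1)) = rv_div X Z"
        using pos[OF XC] pos[OF ZC] by (simp add: rv_div_def fun_eq_iff powr_neg_one less_imp_le)
      ultimately have "\<phi> (rv_div X Z) \<ge> \<phi> X - \<phi> Z" by simp
      then have "e \<in> I \<phi>" unfolding I_def using Z by blast
      then show "Inf (I \<phi>) \<le> e" by (rule Inf_lower)
    qed
  qed
  have zeroD: "(\<lambda>_. 0) \<in> dual_set C Tlog"
    unfolding dual_set_def log_linear_def by simp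
  have Inn: "0 \<le> Inf (I \<phi>)" for \<phi>
    unfolding I_def using pipos by (intro Inf_greatest) auto
  have le2: "m \<le> (SUP \<phi>\<in>dual_set C Tlog. Inf (I \<phi>))"
  proof (rule dense_le)
    fix x assume xm: "x < m"
    show "x \<le> (SUP \<phi>\<in>dual_set C Tlog. Inf (I \<phi>))"
    proof (cases "x \<le> 0")
      case True
      have "0 \<le> (SUP \<phi>\<in>dual_set C Tlog. Inf (I \<phi>))"
        using Inn[of "\<lambda>_. 0"] zeroD by (meson SUP_upper2)
      then show ?thesis using True by simp
    next
      case False
      obtain x' where x': "x < x'" "x' < m" using dense[OF xm] by blast
      obtain r where r: "x = ereal r" using False x' by (cases x) auto
      obtain r' where r': "x' = ereal r'" using False x' by (cases x') auto
      have rpos: "0 < r" using False r by simp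
      have rr: "r < r'" using x' r r' by simp
      define c where "c = ln r"
      define x0 where "x0 = rv_log X"
      have x0V: "x0 \<in> V" unfolding x0_def using logV[OF XC] .
      define A where "A = {y \<in> topspace Tlog. \<rho> y \<le> ereal c}"
      have Acl: "closedin Tlog A" using lsc unfolding lsc_on_def A_def \<rho>_def by blast
      have Acv: "convex_fun_set A" unfolding convex_fun_set_def
      proof (intro ballI allI impI)
        fix y z and t :: real assume y: "y \<in> A" and z: "z \<in> A" and t: "0 \<le> t \<and> t \<le> 1"
        have yz: "y \<in> V" "z \<in> V" using y z top unfolding A_def by auto
        have "\<rho> (\<lambda>\<omega>. t * y \<omega> + (1 - t) * z \<omega>) \<le> max (\<rho> y) (\<rho> z)"
          using qc yz t unfolding quasi_convex_on_def \<rho>_def V_def by blast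
        also have "\<dots> \<le> ereal c" using y z unfolding A_def by auto
        finally show "(\<lambda>\<omega>. t * y \<omega> + (1 - t) * z \<omega>) \<in> A"
          unfolding A_def using lin_comb[OF lin yz] top by auto
      qed
      have x0A: "x0 \<notin> A"
      proof
        assume "x0 \<in> A"
        then have "\<rho> x0 \<le> ereal c" unfolding A_def by blast
        also have "\<dots> < ereal (ln r')" unfolding c_def using rpos rr by simp
        finally have "\<rho> x0 < ereal (ln r')" .
        then obtain e where e: "e \<in> {ereal (pi_log \<pi> L) | L. L \<in> logset S \<and> (\<lambda>\<omega>. x0 \<omega> - L \<omega>) \<in> A_nu K \<rho>t}"
            "e < ereal (ln r')"
          unfolding \<rho>_def rho_log_def by (auto simp: Inf_less_iff)
        then obtain L where L: "e = ereal (pi_log \<pi> L)" "L \<in> logset S" "(\<lambda>\<omega>. x0 \<omega> - L \<omega>) \<in> A_nu K \<rho>t"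
          by blast
        then obtain Z where Z: "Z \<in> S" "L = rv_log Z" unfolding logset_def by blast
        have ZC: "Z \<in> C" using Z(1) SC by blast
        have divK': "rv_div X Z \<in> K" using divK XC Z(1) by blast
        have "rv_exp (\<lambda>\<omega>. x0 \<omega> - L \<omega>) = rv_div X Z"
          using pos[OF XC] pos[OF ZC] unfolding Z(2) x0_def
          by (simp add: rv_exp_def rv_log_def rv_div_def fun_eq_iff exp_diff)
        moreover have "nu \<rho>t (\<lambda>\<omega>. x0 \<omega> - L \<omega>) \<le> 0" using L(3) unfolding A_nu_def by blast
        ultimately have "ln (\<rho>t (rv_div X Z)) \<le> 0" unfolding nu_def by simp
        then have "\<rho>t (rv_div X Z) \<le> 1" using rhopos[OF divK'] by simp
        then have "rv_div X Z \<in> acc_set K \<rho>t" using divK' unfolding acc_set_def by blast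
        then have "m \<le> ereal (\<pi> Z)" unfolding m_def MARRM_def using Z(1) by (intro Inf_lower) blast
        moreover have "ln (\<pi> Z) < ln r'" using e L(1) explog[OF ZC] unfolding Z(2) pi_log_def by simp
        then have "\<pi> Z < r'" using pipos Z(1) rpos rr by simp
        then have "ereal (\<pi> Z) < ereal r'" by simp
        ultimately have "m < x'" unfolding r' by (rule le_less_trans)
        then show False using x' by simp
      qed
      obtain \<psi> where \<psi>: "linf V \<psi>" "continuous_map Tlog euclideanreal \<psi>" "\<forall>a\<in>A. \<psi> a < \<psi> x0"
        using separation[OF L[folded V_def] Acl Acv x0V x0A] by blast
      define \<phi> where "\<phi> = \<psi> \<circ> rv_log"
      have \<phi>D: "\<phi> \<in> dual_set C Tlog" unfolding dual_set_def
      proof (intro CollectI conjI)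
        show "continuous_map (tau_of C Tlog) euclideanreal \<phi>"
          unfolding tau_of_def \<phi>_def by (rule continuous_map_pullback[OF \<psi>(2)])
        show "log_linear C \<phi>" unfolding log_linear_def
        proof (intro ballI allI)
          fix Y1 Y2 a b assume Y1: "Y1 \<in> C" and Y2: "Y2 \<in> C"
          have "rv_log (\<lambda>\<omega>. Y1 \<omega> powr a * Y2 \<omega> powr b) = (\<lambda>\<omega>. a * rv_log Y1 \<omega> + b * rv_log Y2 \<omega>)"
          proof -
            have "ln (Y1 w powr a * Y2 w powr b) = a * ln (Y1 w) + b * ln (Y2 w)" for w
              using pos[OF Y1, of w] pos[OF Y2, of w] by (simp add: ln_mult ln_powr)
            then show ?thesis by (simp add: rv_log_def fun_eq_iff)
          qed
          then show "\<phi> (\<lambda>\<omega>. Y1 \<omega> powr a * Y2 \<omega> powr b) = a * \<phi> Y1 + b * \<phi> Y2"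
            using \<psi>(1) logV[OF Y1] logV[OF Y2] unfolding \<phi>_def linf_def by simp
        qed
      qed
      have "ereal r \<le> Inf (I \<phi>)" unfolding I_def
      proof (rule Inf_greatest)
        fix e assume "e \<in> {ereal (\<pi> Z) | Z W. Z \<in> S \<and> W \<in> acc_set K \<rho>t \<and> \<phi> W \<ge> \<phi> X - \<phi> Z}"
        then obtain Z W where ZW: "e = ereal (\<pi> Z)" "Z \<in> S" "W \<in> acc_set K \<rho>t" "\<phi> W \<ge> \<phi> X - \<phi> Z"
          by blast
        have ZC: "Z \<in> C" using ZW(2) SC by blast
        have WK: "W \<in> K" "\<rho>t W \<le> 1" using ZW(3) unfolding acc_set_def by auto
        have WC: "W \<in> C" using WK(1) KC by blast
        define y where "y = (\<lambda>\<omega>. rv_log W \<omega> + rv_log Z \<omega>)"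
        have "y = rv_log (\<lambda>\<omega>. W \<omega> * Z \<omega>)"
        proof -
          have "ln (W w * Z w) = ln (W w) + ln (Z w)" for w
            using pos[OF WC, of w] pos[OF ZC, of w] by (simp add: ln_mult)
          then show ?thesis unfolding y_def by (simp add: rv_log_def fun_eq_iff)
        qed
        moreover have "(\<lambda>\<omega>. W \<omega> * Z \<omega>) \<in> C" using grp WC ZC unfolding is_mult_group_def by blast
        ultimately have yV: "y \<in> V" using logV by simp
        have "\<psi> y = \<psi> (rv_log W) + 1 * \<psi> (rv_log Z)"
          unfolding y_def using linf_add_smul[OF \<psi>(1) logV[OF WC] logV[OF ZC], of 1] by simp
        then have "\<psi> y \<ge> \<psi> x0" using ZW(4) unfolding \<phi>_def x0_def by simp
        then have "y \<notin> A" using \<psi>(3) by force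
        then have ny: "\<not> \<rho> y \<le> ereal c" unfolding A_def using yV top by blast
        have "(\<lambda>\<omega>. y \<omega> - rv_log Z \<omega>) = rv_log W" unfolding y_def by simp
        moreover have "rv_log W \<in> A_nu K \<rho>t"
        proof -
          have "nu \<rho>t (rv_log W) = ln (\<rho>t W)" unfolding nu_def using explog[OF WC] by simp
          also have "\<dots> \<le> 0" using WK rhopos[OF WK(1)] by simp
          finally show ?thesis unfolding A_nu_def logset_def using WK(1) by blast
        qed
        moreover have "rv_log Z \<in> logset S" using ZW(2) unfolding logset_def by blast
        ultimately have "\<rho> y \<le> ereal (pi_log \<pi> (rv_log Z))"
          unfolding \<rho>_def rho_log_def by (intro Inf_lower) auto
        also have "pi_log \<pi> (rv_log Z) = ln (\<pi> Z)" unfolding pi_log_def using explog[OF ZC] by simp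
        finally have "ereal (ln r) < ereal (ln (\<pi> Z))" using ny unfolding c_def by (meson not_le less_le_trans)
        then have "ln (\<pi> Z) > ln r" by simp
        then have "r < \<pi> Z" using rpos pipos ZW(2) by simp
        then show "ereal r \<le> e" using ZW(1) by simp
      qed
      also have "\<dots> \<le> (SUP \<phi>\<in>dual_set C Tlog. Inf (I \<phi>))" using \<phi>D by (rule SUP_upper)
      finally show ?thesis using r by simp
    qed
  qed
  show ?thesis using le1 le2 unfolding m_def I_def by simp
qed


theorem mainTheorem15:
  fixes M :: "'a measure" and C S K :: "('a \<Rightarrow> real) set"
    and \<pi> \<rho>t :: "('a \<Rightarrow> real) \<Rightarrow> real" and Tlog :: "('a \<Rightarrow> real) topology"
    and X :: "'a \<Rightarrow> real"
  assumes "prob_space M"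
    and "C \<noteq> {}" and "S \<noteq> {}" and "K \<noteq> {}"
    and "C \<subseteq> L0pp M" and "S \<subseteq> L0pp M" and "K \<subseteq> L0pp M"
    and "\<forall>Y\<in>C. \<forall>Z\<in>S. rv_div Y Z \<in> K"
    and "is_cone K" and "is_mult_group C"
    and "K \<subseteq> C" and "S \<subseteq> C"
    and "\<forall>Z\<in>S. 0 < \<pi> Z"
    and "lctvs (logset C) Tlog"
    and "is_RRM M K \<rho>t"
    and "quasi_convex_on (logset C) (rho_log (A_nu K \<rho>t) (logset S) (pi_log \<pi>))"
    and "lsc_on Tlog (rho_log (A_nu K \<rho>t) (logset S) (pi_log \<pi>))"
    and "X \<in> C"
  shows "MARRM S \<pi> (acc_set K \<rho>t) X =
    (SUP \<phi>\<in>dual_set C Tlog.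
       Inf {ereal (\<pi> Z) | Z W. Z \<in> S \<and> W \<in> acc_set K \<rho>t \<and> \<phi> W \<ge> \<phi> X - \<phi> Z})"
  by (rule main[OF assms])

end
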